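(* Let $\varepsilon\in(0,1]$ and $D>0$, and set $n_0:=4K(d+1)/\varepsilon$. Then the set $$\mathcal S=\bigcup_{n\ge n_0}\ \bigcup_{\theta\in\Theta}\ \bigcup_{(x,x^* )\in[K^\theta]\times[K^*]:\,|I_{n,D}(x,x^*,\theta)|\ge n\varepsilon}\{S^{\theta,n}_x-S^{*,n}_{x^*}\}$$ is relatively compact in $(C^0([0,1]),\|\cdot\|_\infty)$.
   Context: Fix integers $K\ge1$, $d\ge1$, $\sigma_-\in(0,1)$; $[K']=\{1,\dots,K'\}$; $\Delta_{K'}$ = probability vectors on $[K']$; $\Sigma^{\sigma_-}_{K'}$ = $K'\times K'$ stochastic matrices with all entries $\ge\sigma_-$; $\mathbb R_d[X]$ = real polynomials of degree $\le d$ on $\mathbb R_+$; $\Gamma$ a set of probability densities on $\mathbb R$. $\Theta=\bigcup_{K'=1}^K\{[K']\}\times\Delta_{K'}\times\Sigma^{\sigma_-}_{K'}\times\Gamma^{K'}\times(\mathbb R_d[X])^{K'}$, elements $\theta=(K^\theta,\pi^\theta,Q^\theta,\gamma^\theta,T^\theta)$ with trends $T^\theta_x\in\mathbb R_d[X]$; $\theta^*=(K^*,\pi^*,Q^*,\gamma^*,T^* )\in\Theta$ is a fixed (true) parameter. $I_{n,D}(x,x^*,\theta)=\{t\in\{1,\dots,n\}:|T^*_{x^*}(t)-T^\theta_x(t)|\le D\}$. Rescaled trends: $S^{\theta,n}_x(u)=T^\theta_x(nu)$ and $S^{*,n}_{x^*}(u)=T^*_{x^*}(nu)$ for $u\in[0,1]$.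 *)

theory Defs
  imports "HOL-Analysis.Analysis" "HOL-Computational_Algebra.Polynomial"
begin

text \<open>A parameter theta = (K', pi, Q, gamma, T). Hidden states are indexed by {1..K'};
  values of pi, Q, gamma, T outside {1..K'} are irrelevant.\<close>
type_synonym param =
  "nat \<times> (nat \<Rightarrow> real) \<times> (nat \<Rightarrow> nat \<Rightarrow> real) \<times> (nat \<Rightarrow> real \<Rightarrow> real) \<times> (nat \<Rightarrow> real poly)"

definition prob_vec :: "nat \<Rightarrow> (nat \<Rightarrow> real) \<Rightarrow> bool" where
  "prob_vec K' p \<longleftrightarrow> (\<forall>i\<in>{1..K'}. 0 \<le> p i) \<and> (\<Sum>i=1..K'. p i) = 1"

definition stoch_mat_lb :: "real \<Rightarrow> nat \<Rightarrow> (nat \<Rightarrow> nat \<Rightarrow> real) \<Rightarrow> bool" where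
  "stoch_mat_lb \<sigma> K' Q \<longleftrightarrow>
     (\<forall>i\<in>{1..K'}. \<forall>j\<in>{1..K'}. \<sigma> \<le> Q i j) \<and> (\<forall>i\<in>{1..K'}. (\<Sum>j=1..K'. Q i j) = 1)"

definition Theta :: "nat \<Rightarrow> nat \<Rightarrow> real \<Rightarrow> (real \<Rightarrow> real) set \<Rightarrow> param set" where
  "Theta K d \<sigma> \<Gamma> = {(K', p, Q, g, T). 1 \<le> K' \<and> K' \<le> K \<and> prob_vec K' p \<and> stoch_mat_lb \<sigma> K' Q
       \<and> (\<forall>x\<in>{1..K'}. g x \<in> \<Gamma>) \<and> (\<forall>x\<in>{1..K'}. degree (T x) \<le> d)}"

definition I_set :: "nat \<Rightarrow> real \<Rightarrow> (nat \<Rightarrow> real poly) \<Rightarrow> nat \<Rightarrow> (nat \<Rightarrow> real poly) \<Rightarrow> nat \<Rightarrow> nat set" where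
  "I_set n D Ts xs T x = {t\<in>{1..n}. \<bar>poly (Ts xs) (real t) - poly (T x) (real t)\<bar> \<le> D}"

definition rescaled :: "real poly \<Rightarrow> nat \<Rightarrow> real \<Rightarrow> real" where
  "rescaled P n u = poly P (real n * u)"

text \<open>The space (C^0([0,1]), sup norm), elements are functions extensional on [0,1].\<close>
definition C01 :: "(real \<Rightarrow> real) metric" where
  "C01 = cfunspace (top_of_set {0..1}) euclidean_metric"

definition relatively_compact_C01 :: "(real \<Rightarrow> real) set \<Rightarrow> bool" where
  "relatively_compact_C01 A \<longleftrightarrow> compactin (mtopology_of C01) (mtopology_of C01 closure_of A)"

end

theory Submission
  imports Defs
begin


lemma C01_mspace:
  assumes "continuous_on {0..1} f"
  shows "restrict f {0..1} \<in> mspace C01"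
proof -
  have c: "compactin (top_of_set {0..1::real}) (topspace (top_of_set {0..1}))"
    by (simp add: compactin_subtopology compact_Icc)
  have "continuous_on {0..1} (restrict f {0..1})"
    using assms by (rule continuous_on_cong[THEN iffD1, rotated -1]) auto
  then show ?thesis unfolding C01_def
    using compact_continuous_image[OF assms compact_Icc] compact_imp_bounded
    by (simp add: compactin_mspace_cfunspace[OF c])
qed

lemma C01_complete: "mcomplete_of C01"
proof -
  have e: "(Met_TC.Self :: real metric) = euclidean_metric"
    by (simp add: Met_TC.Self_def euclidean_metric_def)
  have "Metric_space.mcomplete (UNIV::real set) dist"
    using complete_UNIV by simp
  from Met_TC.mcomplete_cfunspace[OF this, of "top_of_set {0..1::real}"]
  show ?thesis unfolding C01_def e .
qed

lemma C01_dist: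
  assumes "f \<in> mspace C01" "g \<in> mspace C01" "0 \<le> B" "\<And>u. u \<in> {0..1} \<Longrightarrow> \<bar>f u - g u\<bar> \<le> B"
  shows "mdist C01 f g \<le> B"
  unfolding C01_def using assms
  by (intro mdist_cfunspace_le) (auto simp: dist_real_def)



lemma clamp_close:
  fixes c y M :: real
  assumes "\<bar>c\<bar> \<le> M"
  shows "\<bar>c - max (-M) (min M y)\<bar> \<le> \<bar>c - y\<bar>"
  using assms unfolding max_def min_def by (smt (verit))

lemma grid_tb:
  fixes L :: "nat \<Rightarrow> real \<Rightarrow> real" and M \<Lambda> :: real and d :: nat
  assumes M: "0 \<le> M" and Lam: "0 < \<Lambda>"
    and cont: "\<And>i. i \<le> d \<Longrightarrow> continuous_on {0..1} (L i)"
    and bnd: "\<And>i u. i \<le> d \<Longrightarrow> u \<in> {0..1} \<Longrightarrow> \<bar>L i u\<bar> \<le> \<Lambda>"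
  defines "F \<equiv> \<lambda>c. restrict (\<lambda>u. \<Sum>i\<le>d. c i * L i u) {0..1::real}"
  shows "Metric_space.mtotally_bounded (mspace C01) (mdist C01) (F ` {c. \<forall>i\<le>d. \<bar>c i\<bar> \<le> M})"
  unfolding Metric_space.mtotally_bounded_def[OF Metric_space_mspace_mdist]
proof (intro allI impI)
  fix e :: real assume e: "0 < e"
  define h where "h = e / (2 * (real d + 1) * \<Lambda>)"
  have h: "0 < h" using e Lam by (simp add: h_def)
  define N where "N = \<lceil>M / h\<rceil>"
  define cl where "cl = (\<lambda>y::real. max (-M) (min M y))"
  define Gr where "Gr = (\<lambda>k. cl (real_of_int k * h)) ` {-N..N}"
  define Kn where "Kn = F ` (PiE {..d} (\<lambda>_. Gr))"
  have Fin: "F c \<in> mspace C01" for c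
    unfolding F_def by (intro C01_mspace continuous_intros cont) auto
  have "finite Kn" unfolding Kn_def Gr_def by (intro finite_imageI finite_PiE) auto
  moreover have "Kn \<subseteq> F ` {c. \<forall>i\<le>d. \<bar>c i\<bar> \<le> M}"
    unfolding Kn_def Gr_def cl_def
  proof (rule image_mono, safe)
    fix c i assume "c \<in> {..d} \<rightarrow>\<^sub>E (\<lambda>k. max (- M) (min M (real_of_int k * h))) ` {- N..N}" "i \<le> d"
    then obtain k where "c i = max (- M) (min M (real_of_int k * h))" by (auto simp: PiE_iff)
    then show "\<bar>c i\<bar> \<le> M" using M by (simp add: max_def min_def abs_le_iff)
  qed
  moreover have "F ` {c. \<forall>i\<le>d. \<bar>c i\<bar> \<le> M} \<subseteq> (\<Union>x\<in>Kn. Metric_space.mball (mspace C01) (mdist C01) x e)"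
  proof
    fix f assume "f \<in> F ` {c. \<forall>i\<le>d. \<bar>c i\<bar> \<le> M}"
    then obtain c where c: "\<forall>i\<le>d. \<bar>c i\<bar> \<le> M" and f: "f = F c" by auto
    define g where "g = restrict (\<lambda>i. cl (real_of_int \<lfloor>c i / h\<rfloor> * h)) {..d}"
    have gap: "\<bar>c i - g i\<bar> \<le> h" if "i \<le> d" for i
    proof -
      have "\<bar>c i - g i\<bar> \<le> \<bar>c i - real_of_int \<lfloor>c i / h\<rfloor> * h\<bar>"
        unfolding g_def cl_def using that c clamp_close by simp
      also have "\<dots> \<le> h"
      proof -
        have a: "real_of_int \<lfloor>c i / h\<rfloor> \<le> c i / h" "c i / h < real_of_int \<lfloor>c i / h\<rfloor> + 1" by linarith+
        have "real_of_int \<lfloor>c i / h\<rfloor> * h \<le> c i" using a(1) h by (simp add: le_divide_eq)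
        moreover have "c i < (real_of_int \<lfloor>c i / h\<rfloor> + 1) * h" by (metis a(2) h pos_divide_less_eq)
        ultimately show ?thesis by (simp add: algebra_simps)
      qed
      finally show ?thesis .
    qed
    have "g \<in> PiE {..d} (\<lambda>_. Gr)"
    proof -
      have "\<lfloor>c i / h\<rfloor> \<in> {-N..N}" if "i \<le> d" for i
      proof -
        have "- M \<le> c i" "c i \<le> M" using c that by auto
        hence "-M/h \<le> c i / h" "c i / h \<le> M / h" using h by (auto simp: divide_right_mono, metis divide_minus_left divide_right_mono less_eq_real_def)
        hence "\<lfloor>-M/h\<rfloor> \<le> \<lfloor>c i / h\<rfloor>" "\<lfloor>c i / h\<rfloor> \<le> \<lfloor>M/h\<rfloor>" by (auto intro: floor_mono)
        moreover have "\<lfloor>M/h\<rfloor> \<le> N" unfolding N_def by linarith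
        moreover have "\<lfloor>-M/h\<rfloor> = - N" unfolding N_def by (simp add: ceiling_def)
        ultimately show ?thesis by auto
      qed
      then show ?thesis unfolding g_def Gr_def by (auto simp: PiE_iff)
    qed
    hence gK: "F g \<in> Kn" unfolding Kn_def by auto
    have "mdist C01 (F g) (F c) \<le> e / 2"
    proof (rule C01_dist[OF Fin Fin])
      show "0 \<le> e / 2" using e by simp
      fix u :: real assume u: "u \<in> {0..1}"
      have "\<bar>F g u - F c u\<bar> = \<bar>\<Sum>i\<le>d. (g i - c i) * L i u\<bar>"
        using u unfolding F_def by (simp add: sum_subtractf[symmetric] algebra_simps)
      also have "\<dots> \<le> (\<Sum>i\<le>d. \<bar>(g i - c i) * L i u\<bar>)" by (rule sum_abs)
      also have "\<dots> \<le> (\<Sum>i\<le>d. h * \<Lambda>)"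
      proof (rule sum_mono)
        fix i assume "i \<in> {..d}"
        then have "\<bar>g i - c i\<bar> \<le> h" using gap by (simp add: abs_minus_commute)
        then show "\<bar>(g i - c i) * L i u\<bar> \<le> h * \<Lambda>"
          unfolding abs_mult using bnd[OF _ u, of i] \<open>i \<in> {..d}\<close> by (intro mult_mono) auto
      qed
      also have "\<dots> = e / 2"
      proof -
        have "(2 * (real d + 1) * \<Lambda>) \<noteq> 0" using Lam by simp
        then show ?thesis by (simp add: h_def) (simp add: field_simps)
      qed
      finally show "\<bar>F g u - F c u\<bar> \<le> e / 2" .
    qed
    then have "f \<in> Metric_space.mball (mspace C01) (mdist C01) (F g) e"
      using e Fin f by (simp add: Metric_space.in_mball[OF Metric_space_mspace_mdist])
    then show "f \<in> (\<Union>x\<in>Kn. Metric_space.mball (mspace C01) (mdist C01) x e)" using gK by blast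
  qed
  ultimately show "\<exists>K. finite K \<and> K \<subseteq> F ` {c. \<forall>i\<le>d. \<bar>c i\<bar> \<le> M} \<and>
         F ` {c. \<forall>i\<le>d. \<bar>c i\<bar> \<le> M} \<subseteq> (\<Union>x\<in>K. Metric_space.mball (mspace C01) (mdist C01) x e)"
    by blast
qed



lemma lagrange:
  fixes P :: "real poly" and w :: "nat \<Rightarrow> real"
  assumes degP: "degree P \<le> d" and dist: "\<And>i j. i \<le> d \<Longrightarrow> j \<le> d \<Longrightarrow> i \<noteq> j \<Longrightarrow> w i \<noteq> w j"
  shows "poly P u = (\<Sum>i\<le>d. poly P (w i) * (\<Prod>j\<in>{..d}-{i}. (u - w j) / (w i - w j)))"
proof -
  define Lp where "Lp i = smult (inverse (\<Prod>j\<in>{..d}-{i}. w i - w j)) (\<Prod>j\<in>{..d}-{i}. [:- w j, 1:])" for i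
  have polyL: "poly (Lp i) x = (\<Prod>j\<in>{..d}-{i}. (x - w j) / (w i - w j))" for i x
    unfolding prod_dividef by (simp add: Lp_def poly_prod divide_inverse mult.commute)
  have degL: "degree (Lp i) \<le> d" if "i \<le> d" for i
  proof -
    have "degree (Lp i) \<le> degree (\<Prod>j\<in>{..d}-{i}. [:- w j, 1:])"
      unfolding Lp_def by (rule degree_smult_le)
    also have "\<dots> \<le> (\<Sum>j\<in>{..d}-{i}. degree [:- w j, 1:])"
      using degree_prod_sum_le[of "{..d}-{i}" "\<lambda>j. [:- w j, 1:]"] by (simp add: o_def)
    also have "\<dots> = card ({..d}-{i})" by simp
    also have "\<dots> = d" using that by simp
    finally show ?thesis .
  qed
  define R where "R = P - (\<Sum>i\<le>d. smult (poly P (w i)) (Lp i))"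
  have degR: "degree R \<le> d"
    unfolding R_def
    by (intro order.trans[OF degree_diff_le_max] max.boundedI degP degree_sum_le)
       (auto intro: order.trans[OF degree_smult_le] degL)
  have root: "poly R (w k) = 0" if k: "k \<le> d" for k
  proof -
    have "poly (\<Sum>i\<le>d. smult (poly P (w i)) (Lp i)) (w k) = (\<Sum>i\<le>d. if i = k then poly P (w k) else 0)"
      unfolding poly_sum
    proof (rule sum.cong[OF refl])
      fix i assume i: "i \<in> {..d}"
      show "poly (smult (poly P (w i)) (Lp i)) (w k) = (if i = k then poly P (w k) else 0)"
      proof (cases "i = k")
        case True
        have "(\<Prod>j\<in>{..d}-{i}. (w k - w j) / (w i - w j)) = (\<Prod>j\<in>{..d}-{i}. 1)"
          by (rule prod.cong[OF refl]) (use True k dist in auto)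
        then show ?thesis using True by (simp add: polyL)
      next
        case False
        have "(\<Prod>j\<in>{..d}-{i}. (w k - w j) / (w i - w j)) = 0"
          by (rule prod_zero) (use False k in auto)
        then show ?thesis using False by (simp add: polyL)
      qed
    qed
    also have "\<dots> = poly P (w k)" using k by simp
    finally show ?thesis unfolding R_def by simp
  qed
  have "R = 0"
  proof (rule ccontr)
    assume "R \<noteq> 0"
    have "w ` {..d} \<subseteq> {x. poly R x = 0}" using root by auto
    moreover have "finite {x. poly R x = 0}" using \<open>R \<noteq> 0\<close> poly_roots_finite by blast
    ultimately have "card (w ` {..d}) \<le> card {x. poly R x = 0}" by (rule card_mono[rotated])
    also have "\<dots> \<le> degree R" using card_poly_roots_bound[OF \<open>R \<noteq> 0\<close>] .
    also have "card (w ` {..d}) = d + 1"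
      by (subst card_image) (auto intro!: inj_onI dest: dist)
    finally show False using degR by simp
  qed
  then have "poly P u = poly (\<Sum>i\<le>d. smult (poly P (w i)) (Lp i)) u"
    unfolding R_def by simp
  also have "\<dots> = (\<Sum>i\<le>d. poly P (w i) * (\<Prod>j\<in>{..d}-{i}. (u - w j) / (w i - w j)))"
    by (simp add: poly_sum polyL)
  finally show ?thesis .
qed



lemma prod_bound:
  fixes w :: "nat \<Rightarrow> real" and \<delta> u :: real
  assumes "i \<le> d" "0 < \<delta>" "u \<in> {0..1}" "\<And>j. j \<le> d \<Longrightarrow> w j \<in> {0..1}"
    and sep: "\<And>i j. i \<le> d \<Longrightarrow> j \<le> d \<Longrightarrow> i \<noteq> j \<Longrightarrow> \<delta> \<le> \<bar>w i - w j\<bar>"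
  shows "\<bar>\<Prod>j\<in>{..d}-{i}. (u - w j) / (w i - w j)\<bar> \<le> (1/\<delta>) ^ d"
proof -
  have "\<bar>\<Prod>j\<in>{..d}-{i}. (u - w j) / (w i - w j)\<bar> = (\<Prod>j\<in>{..d}-{i}. \<bar>u - w j\<bar> / \<bar>w i - w j\<bar>)"
    by (simp add: abs_prod)
  also have "\<dots> \<le> (\<Prod>j\<in>{..d}-{i}. 1/\<delta>)"
  proof (rule prod_mono)
    fix j assume "j \<in> {..d}-{i}"
    then have j: "j \<in> {..d}" "j \<noteq> i" by auto
    have a: "\<bar>u - w j\<bar> \<le> 1" using assms(3) assms(4)[of j] j by auto
    have b: "\<delta> \<le> \<bar>w i - w j\<bar>" using sep[of i j] j assms(1) by auto
    show "0 \<le> \<bar>u - w j\<bar> / \<bar>w i - w j\<bar> \<and> \<bar>u - w j\<bar> / \<bar>w i - w j\<bar> \<le> 1 / \<delta>"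
      using a b assms(2) by (auto intro: frac_le)
  qed
  also have "\<dots> = (1/\<delta>) ^ d" using assms(1) by simp
  finally show ?thesis .
qed

lemma strict_sorted_gap:
  fixes s :: "nat list"
  assumes "sorted_wrt (<) s" "a \<le> b" "b < length s"
  shows "s ! a + (b - a) \<le> s ! b"
  using assms(2,3)
proof (induction b)
  case 0 then show ?case by simp
next
  case (Suc b)
  show ?case
  proof (cases "a = Suc b")
    case True then show ?thesis by simp
  next
    case False
    then have "a \<le> b" using Suc by simp
    then have "s ! a + (b - a) \<le> s ! b" using Suc by simp
    moreover have "s ! b < s ! Suc b" using sorted_wrt_nth_less[OF assms(1)] Suc by simp
    ultimately show ?thesis using \<open>a \<le> b\<close> by linarith
  qed
qed

lemma spread_nodes:
  fixes A :: "nat set" and d k :: nat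
  assumes "finite A" "(d+1) * k \<le> card A" "1 \<le> k"
  obtains t where "\<And>i. i \<le> d \<Longrightarrow> t i \<in> A" "\<And>i j. i \<le> d \<Longrightarrow> j \<le> d \<Longrightarrow> i < j \<Longrightarrow> t i + (j - i) * k \<le> t j"
proof -
  define s where "s = sorted_list_of_set A"
  have ss: "sorted_wrt (<) s" unfolding s_def by simp
  have ls: "length s = card A" unfolding s_def by simp
  have sA: "set s = A" unfolding s_def using assms(1) by simp
  show ?thesis
  proof (rule that[of "\<lambda>i. s ! (i * k)"])
    fix i assume i: "i \<le> d"
    have "i * k < length s"
    proof (cases "k = 0")
      case True then show ?thesis using assms ls by (cases "card A") auto
    next
      case False
      have "i * k \<le> d * k" using i by simp
      then have "i * k < (d+1) * k" using False by (simp only: add_mult_distrib mult_1_left)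
      then show ?thesis using assms ls by simp
    qed
    then show "s ! (i * k) \<in> A" using sA nth_mem by blast
  next
    fix i j assume ij: "i \<le> d" "j \<le> d" "i < j"
    have "j * k < length s"
    proof (cases "k = 0")
      case True then show ?thesis using assms ls ij by (cases "card A") auto
    next
      case False
      have "j * k \<le> d * k" using ij by simp
      then have "j * k < (d+1) * k" using False by (simp only: add_mult_distrib mult_1_left)
      then show ?thesis using assms ls by simp
    qed
    moreover have "i * k \<le> j * k" using ij by simp
    ultimately have "s ! (i*k) + (j*k - i*k) \<le> s ! (j*k)" by (intro strict_sorted_gap[OF ss])
    then show "s ! (i * k) + (j - i) * k \<le> s ! (j * k)" by (simp add: diff_mult_distrib)
  qed
qed



lemma lagrange_bound:
  fixes P :: "real poly" and w :: "nat \<Rightarrow> real"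
  assumes degP: "degree P \<le> d" and dpos: "0 < \<delta>" and D: "0 \<le> D"
    and win: "\<And>j. j \<le> d \<Longrightarrow> w j \<in> {0..1}"
    and sep: "\<And>i j. i \<le> d \<Longrightarrow> j \<le> d \<Longrightarrow> i \<noteq> j \<Longrightarrow> \<delta> \<le> \<bar>w i - w j\<bar>"
    and val: "\<And>i. i \<le> d \<Longrightarrow> \<bar>poly P (w i)\<bar> \<le> D"
    and u: "u \<in> {0..1}"
  shows "\<bar>poly P u\<bar> \<le> (real d + 1) * D * (1/\<delta>) ^ d"
proof -
  have dist: "w i \<noteq> w j" if "i \<le> d" "j \<le> d" "i \<noteq> j" for i j
    using sep[OF that] dpos by auto
  have "\<bar>poly P u\<bar> = \<bar>\<Sum>i\<le>d. poly P (w i) * (\<Prod>j\<in>{..d}-{i}. (u - w j) / (w i - w j))\<bar>"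
    using lagrange[OF degP dist] by simp
  also have "\<dots> \<le> (\<Sum>i\<le>d. \<bar>poly P (w i) * (\<Prod>j\<in>{..d}-{i}. (u - w j) / (w i - w j))\<bar>)"
    by (rule sum_abs)
  also have "\<dots> \<le> (\<Sum>i\<le>d. D * (1/\<delta>) ^ d)"
  proof (rule sum_mono)
    fix i assume "i \<in> {..d}"
    then have i: "i \<le> d" by simp
    show "\<bar>poly P (w i) * (\<Prod>j\<in>{..d}-{i}. (u - w j) / (w i - w j))\<bar> \<le> D * (1/\<delta>) ^ d"
      unfolding abs_mult
      using val[OF i] prod_bound[OF i dpos u win sep] D by (intro mult_mono) auto
  qed
  also have "\<dots> = (real d + 1) * D * (1/\<delta>) ^ d" by simp
  finally show ?thesis .
qed

lemma div_lower:
  fixes m q :: nat assumes "0 < q"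
  shows "real m / real q - 1 \<le> real (m div q)"
proof -
  have "m = q * (m div q) + m mod q" by simp
  moreover have "m mod q < q" using assms by simp
  ultimately have "real m \<le> real q * real (m div q) + real q"
    by (metis add_le_cancel_left less_or_eq_imp_le of_nat_add of_nat_le_iff of_nat_mult)
  then have "real m / real q \<le> real (m div q) + 1"
    using assms by (simp add: divide_le_eq algebra_simps)
  then show ?thesis by simp
qed



theorem theorem11:
  fixes K d :: nat and \<sigma>m :: real and \<Gamma> :: "(real \<Rightarrow> real) set"
    and Ks :: nat and ps :: "nat \<Rightarrow> real" and Qs :: "nat \<Rightarrow> nat \<Rightarrow> real"
    and gs :: "nat \<Rightarrow> real \<Rightarrow> real" and Ts :: "nat \<Rightarrow> real poly" and \<epsilon> D :: real
  assumes "1 \<le> K" and "1 \<le> d" and "0 < \<sigma>m" and "\<sigma>m < 1"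
    and "\<forall>g\<in>\<Gamma>. (\<forall>y. 0 \<le> g y) \<and> (g has_integral 1) UNIV"
    and "(Ks, ps, Qs, gs, Ts) \<in> Theta K d \<sigma>m \<Gamma>"
    and "0 < \<epsilon>" and "\<epsilon> \<le> 1" and "0 < D"
  shows "relatively_compact_C01
    {restrict (\<lambda>u. rescaled (T x) n u - rescaled (Ts xs) n u) {0..1} |
       n K' p Q g T x xs.
       real n \<ge> 4 * real K * (real d + 1) / \<epsilon> \<and> (K', p, Q, g, T) \<in> Theta K d \<sigma>m \<Gamma> \<and>
       x \<in> {1..K'} \<and> xs \<in> {1..Ks} \<and>
       real (card (I_set n D (Ts) xs T x)) \<ge> real n * \<epsilon>}"
    (is "relatively_compact_C01 ?S")
proof -
  note K = assms(1) and d1 = assms(2) and eps = assms(7) and Dpos = assms(9)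
  have degTs: "degree (Ts xs) \<le> d" if "xs \<in> {1..Ks}" for xs
    using assms(6) that by (auto simp: Theta_def)
  define \<delta> where "\<delta> = \<epsilon> / (2 * (real d + 1))"
  have \<delta>: "0 < \<delta>" using eps by (simp add: \<delta>_def)
  define M where "M = (real d + 1) * D * (1/\<delta>) ^ d"
  have M: "0 \<le> M" using Dpos \<delta> by (simp add: M_def)
  define v where "v = (\<lambda>j::nat. real j / real d)"
  define L where "L = (\<lambda>i u. \<Prod>j\<in>{..d}-{i}. (u - v j) / (v i - v j))"
  define F where "F = (\<lambda>c. restrict (\<lambda>u. \<Sum>i\<le>d. c i * L i u) {0..1::real})"
  have dpos: "0 < real d" using d1 by simp
  have vin: "v j \<in> {0..1}" if "j \<le> d" for j using that dpos by (auto simp: v_def)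
  have vsep: "1 / real d \<le> \<bar>v i - v j\<bar>" if "i \<noteq> j" for i j
  proof -
    have "1 \<le> \<bar>real i - real j\<bar>" using that by linarith
    then have "1 / real d \<le> \<bar>real i - real j\<bar> / real d" using dpos by (simp add: divide_right_mono)
    also have "\<dots> = \<bar>v i - v j\<bar>" unfolding v_def using dpos by (simp add: diff_divide_distrib[symmetric])
    finally show ?thesis .
  qed
  have vdist: "v i \<noteq> v j" if "i \<noteq> j" for i j
    using vsep[OF that] dpos by auto
  have Lcont: "continuous_on {0..1} (L i)" for i
    unfolding L_def by (intro continuous_intros) (auto dest: vdist)
  have Lbnd: "\<bar>L i u\<bar> \<le> (1 / (1/real d)) ^ d" if "i \<le> d" "u \<in> {0..1}" for i u
    unfolding L_def using prod_bound[OF that(1) _ that(2) vin vsep] dpos by simp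
  have tb: "Metric_space.mtotally_bounded (mspace C01) (mdist C01) (F ` {c. \<forall>i\<le>d. \<bar>c i\<bar> \<le> M})"
    unfolding F_def
    by (rule grid_tb[OF M _ Lcont Lbnd]) (use dpos in auto)
  have sub: "?S \<subseteq> F ` {c. \<forall>i\<le>d. \<bar>c i\<bar> \<le> M}"
  proof
    fix f assume "f \<in> ?S"
    then obtain n K' p Q g T x xs where f: "f = restrict (\<lambda>u. rescaled (T x) n u - rescaled (Ts xs) n u) {0..1}"
      and n: "real n \<ge> 4 * real K * (real d + 1) / \<epsilon>" and th: "(K', p, Q, g, T) \<in> Theta K d \<sigma>m \<Gamma>"
      and x: "x \<in> {1..K'}" and xs: "xs \<in> {1..Ks}"
      and cardI: "real (card (I_set n D (Ts) xs T x)) \<ge> real n * \<epsilon>"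
      by blast
    define P where "P = pcompose (T x - Ts xs) [:0, real n:]"
    have polyP: "poly P u = rescaled (T x) n u - rescaled (Ts xs) n u" for u
      by (simp add: P_def rescaled_def poly_pcompose mult.commute)
    have "degree (T x - Ts xs) \<le> d"
      using th x degTs[OF xs] by (auto simp: Theta_def intro: order.trans[OF degree_diff_le_max])
    moreover have "degree [:0, real n:] \<le> 1" by (simp add: degree_pCons_eq_if)
    ultimately have "degree (T x - Ts xs) * degree [:0, real n:] \<le> d * 1" by (rule mult_le_mono)
    then have degP: "degree P \<le> d"
      unfolding P_def using degree_pcompose_le[of "T x - Ts xs" "[:0, real n:]"] by simp
    define A where "A = I_set n D Ts xs T x"
    have finA: "finite A" unfolding A_def I_set_def by simp
    have A1n: "A \<subseteq> {1..n}" unfolding A_def I_set_def by auto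
    have "4 * (real d + 1) / \<epsilon> \<le> 4 * real K * (real d + 1) / \<epsilon>"
    proof (intro divide_right_mono)
      have "1 \<le> real K" using K by simp
      then show "4 * (real d + 1) \<le> 4 * real K * (real d + 1)"
        using mult_right_mono[of 1 "real K" "4 * (real d + 1)"] by (simp add: algebra_simps)
    qed (use eps in simp)
    with n have n4: "4 * (real d + 1) \<le> real n * \<epsilon>"
      using eps by (simp add: divide_le_eq)
    have npos: "0 < real n" using n4 eps by (smt (verit) mult_nonpos_nonneg of_nat_0_le_iff)
    define k where "k = card A div (d + 1)"
    have kge: "real n * \<epsilon> / (2 * (real d + 1)) \<le> real k"
    proof -
      define X where "X = real n * \<epsilon> / (real d + 1)"
      define Y where "Y = real (card A) / (real d + 1)"
      have a: "Y - 1 \<le> real k"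
        using div_lower[of "d+1" "card A"] unfolding k_def Y_def by (simp add: add.commute)
      have b: "X \<le> Y"
        using cardI unfolding A_def X_def Y_def by (intro divide_right_mono) auto
      have c: "4 \<le> X" using n4 by (simp add: le_divide_eq X_def)
      have e: "real n * \<epsilon> / (2 * (real d + 1)) = X / 2" by (simp add: X_def)
      show ?thesis unfolding e using a b c by linarith
    qed
    have k1: "1 \<le> k"
    proof -
      have "2 \<le> real n * \<epsilon> / (2 * (real d + 1))" using n4 by (simp add: le_divide_eq)
      then show ?thesis using kge by simp
    qed
    have "(d+1) * k \<le> card A" unfolding k_def by (rule times_div_less_eq_dividend)
    then obtain t where tA: "\<And>i. i \<le> d \<Longrightarrow> t i \<in> A"
      and tgap: "\<And>i j. i \<le> d \<Longrightarrow> j \<le> d \<Longrightarrow> i < j \<Longrightarrow> t i + (j - i) * k \<le> t j"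
      using spread_nodes[OF finA _ k1] by blast
    define w where "w = (\<lambda>i. real (t i) / real n)"
    have win: "w j \<in> {0..1}" if "j \<le> d" for j
      using tA[OF that] A1n npos by (auto simp: w_def divide_le_eq)
    have wval: "\<bar>poly P (w i)\<bar> \<le> D" if "i \<le> d" for i
    proof -
      have "t i \<in> I_set n D Ts xs T x" using tA[OF that] A_def by simp
      then have "\<bar>poly (Ts xs) (real (t i)) - poly (T x) (real (t i))\<bar> \<le> D" by (simp add: I_set_def)
      moreover have "poly P (w i) = poly (T x) (real (t i)) - poly (Ts xs) (real (t i))"
        using npos by (simp add: polyP rescaled_def w_def)
      ultimately show ?thesis by (simp add: abs_minus_commute)
    qed
    have wsep1: "\<delta> \<le> w j - w i" if "i \<le> d" "j \<le> d" "i < j" for i j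
    proof -
      have "1 * k \<le> (j - i) * k" using that by (intro mult_le_mono1) simp
      then have "t i + k \<le> t j" using tgap[OF that] by linarith
      then have "real k \<le> real (t j) - real (t i)" by linarith
      then have "real k / real n \<le> w j - w i" using npos
        by (simp add: w_def diff_divide_distrib[symmetric] divide_right_mono)
      moreover have "\<delta> \<le> real k / real n" using kge npos by (simp add: \<delta>_def le_divide_eq field_simps)
      ultimately show ?thesis by linarith
    qed
    have wsep: "\<delta> \<le> \<bar>w i - w j\<bar>" if "i \<le> d" "j \<le> d" "i \<noteq> j" for i j
    proof (cases "i < j")
      case True then show ?thesis using wsep1[OF that(1,2) True] by linarith
    next
      case False then have "j < i" using that by simp
      then show ?thesis using wsep1[OF that(2,1)] by linarith
    qed
    have supb: "\<bar>poly P u\<bar> \<le> M" if "u \<in> {0..1}" for u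
      unfolding M_def using lagrange_bound[OF degP \<delta> _ win wsep wval that] Dpos by simp
    define c where "c = (\<lambda>i. poly P (v i))"
    have cM: "\<forall>i\<le>d. \<bar>c i\<bar> \<le> M" using supb vin by (simp add: c_def)
    have "f = F c"
    proof
      fix u show "f u = F c u"
      proof (cases "u \<in> {0..1}")
        case True
        have "poly P u = (\<Sum>i\<le>d. poly P (v i) * L i u)"
          unfolding L_def by (rule lagrange[OF degP]) (auto dest: vdist)
        then show ?thesis using True by (simp add: f F_def polyP c_def)
      next
        case False then show ?thesis unfolding f F_def restrict_def by auto
      qed
    qed
    then show "f \<in> F ` {c. \<forall>i\<le>d. \<bar>c i\<bar> \<le> M}" using cM by blast
  qed
  have tbS: "Metric_space.mtotally_bounded (mspace C01) (mdist C01) ?S"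
    by (rule Metric_space.mtotally_bounded_subset[OF Metric_space_mspace_mdist tb sub])
  have "Metric_space.mcomplete (mspace C01) (mdist C01)"
    using C01_complete by (simp add: mcomplete_of_def)
  from Metric_space.mtotally_bounded_eq_compact_closure_of[OF Metric_space_mspace_mdist this, of ?S] tbS
  have "compactin (Metric_space.mtopology (mspace C01) (mdist C01))
          (Metric_space.mtopology (mspace C01) (mdist C01) closure_of ?S)" by blast
  then show ?thesis
    unfolding relatively_compact_C01_def mtopology_of_def by simp
qed

end
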